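(* Let $(\mathcal{T},q)$ be an interaction-free OMQ with $\mathcal{T}$ a DL-Lite$_\mathcal{R}$ TBox and $q=q_1\wedge q_2$ a Boolean CQ with $\mathrm{vars}(q_1)\cap\mathrm{vars}(q_2)=\emptyset$. Then for every ABox $\mathcal{A}$, $\#\mathrm{MS}_{(\mathcal{T},q)}(\mathcal{A})=\#\mathrm{MS}_{(\mathcal{T},q_1)}(\mathcal{A})\cdot\#\mathrm{MS}_{(\mathcal{T},q_2)}(\mathcal{A})$.
   Context: DL-Lite$_\mathcal{R}$ TBoxes contain inclusions $B\sqsubseteq C$, $R\sqsubseteq S$ with $B::=A\mid\exists R$, $C::=B\mid\neg B$, $R$ a role ($r$ or $r^-$), $S::=R\mid\neg R$. An ABox $\mathcal{A}$ is a finite set of assertions $A(c)$, $r(b,c)$; $\mathrm{const}(\mathcal{A})$ is its set of individuals. For an OMQ $Q=(\mathcal{T},q)$, a minimal support of $Q$ in $\mathcal{A}$ is an inclusion-minimal $S\subseteq\mathcal{A}$ such that $q$ holds in every model of $(S,\mathcal{T})$; $\#\mathrm{MS}_Q(\mathcal{A})$ is their number. For a consistent KB $(\mathcal{A},\mathcal{T})$, the canonical model $\mathcal{C}_{\mathcal{A},\mathcal{T}}$ has domain all words $aR_1\cdots R_n$ ($n\ge0$, $a\in\mathrm{const}(\mathcal{A})$, $R_i$ roles) such that if $n\ge1$ then $(\mathcal{A},\mathcal{T})\models\exists R_1(a)$ and there is no $b\in\mathrm{const}(\mathcal{A})$ with $(\mathcal{A},\mathcal{T})\models R_1(a,b)$,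 and for $1\le i<n$, $\mathcal{T}\models\exists R_i^-\sqsubseteq\exists R_{i+1}$ and $R_i^-\neq R_{i+1}$; it interprets $a$ as $a$, $A$ as the individuals $a$ with $(\mathcal{A},\mathcal{T})\models A(a)$ plus words $aR_1\cdots R_n$ ($n\ge1$) with $\mathcal{T}\models\exists R_n^-\sqsubseteq A$, and $r$ as the pairs $(a,b)$ with $r(a,b)\in\mathcal{A}$, plus $(w,wR')$ with $\mathcal{T}\models R'\sqsubseteq r$, plus $(wR',w)$ with $\mathcal{T}\models R'\sqsubseteq r^-$. Elements outside $\mathrm{const}(\mathcal{A})$ are anonymous. Let $\circledast$ be a special symbol and $C^\circledast=C\cup\{\circledast\}$. For an atom $\alpha$ and $\mu:\mathrm{vars}(\alpha)\to\mathrm{const}(\mathcal{A})^\circledast$, write $(\mathcal{A},\mathcal{T})\models_\mu\alpha$ if there is a homomorphism $h:\alpha\to\mathcal{C}_{\mathcal{A},\mathcal{T}}$ with $h(x)=\mu(x)$ when $\mu(x)\in\mathrm{const}(\mathcal{A})$ and $h(x)$ anonymous when $\mu(x)=\circledast$. $(\mathcal{T},q)$ is interaction-free if for every assertion $f$, all atoms $\alpha,\beta$ of $q$ and all $\mu_\alpha:\mathrm{vars}(\alpha)\to\mathrm{const}(f)^\circledast$, $\mu_\beta:\mathrm{vars}(\beta)\to\mathrm{const}(f)^\circledast$, if $(\{f\},\mathcal{T})\models_{\mu_\alpha}\alpha$ and $(\{f\},\mathcal{T})\models_{\mu_\beta}\beta$ then $(\alpha,\mu_\alpha)=(\beta,\mu_\beta)$.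 *)

theory Defs
  imports Main
begin

datatype 'r role = RN 'r | Inv 'r

fun inv :: "'r role \<Rightarrow> 'r role" where
  "inv (RN r) = Inv r"
| "inv (Inv r) = RN r"

datatype ('c,'r) basic = AC 'c | Ex "'r role"

datatype ('c,'r) gconcept = PosC "('c,'r) basic" | NegC "('c,'r) basic"

datatype 'r grole = PosR "'r role" | NegR "'r role"

datatype ('c,'r) axiom = CIncl "('c,'r) basic" "('c,'r) gconcept" | RIncl "'r role" "'r grole"

datatype ('c,'r,'i) assertion = CAss 'c 'i | RAss 'r 'i 'i

datatype ('c,'r,'v) atom = CAtom 'c 'v | RAtom 'r 'v 'v

fun acon :: "('c,'r,'i) assertion \<Rightarrow> 'i set" where
  "acon (CAss _ a) = {a}"
| "acon (RAss _ a b) = {a, b}"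

definition constA :: "('c,'r,'i) assertion set \<Rightarrow> 'i set" where
  "constA A = (\<Union>f\<in>A. acon f)"

fun avars :: "('c,'r,'v) atom \<Rightarrow> 'v set" where
  "avars (CAtom _ x) = {x}"
| "avars (RAtom _ x y) = {x, y}"

definition qvars :: "('c,'r,'v) atom set \<Rightarrow> 'v set" where
  "qvars q = (\<Union>a\<in>q. avars a)"

text \<open>Interpretations; the domain is the whole type 'd.\<close>
record ('c,'r,'i,'d) interp =
  conI :: "'c \<Rightarrow> 'd set"
  roleI :: "'r \<Rightarrow> ('d \<times> 'd) set"
  indI :: "'i \<Rightarrow> 'd"

fun rolei :: "('c,'r,'i,'d) interp \<Rightarrow> 'r role \<Rightarrow> ('d \<times> 'd) set" where
  "rolei I (RN r) = roleI I r"
| "rolei I (Inv r) = (roleI I r)\<inverse>"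

fun basici :: "('c,'r,'i,'d) interp \<Rightarrow> ('c,'r) basic \<Rightarrow> 'd set" where
  "basici I (AC A) = conI I A"
| "basici I (Ex R) = Domain (rolei I R)"

fun gconi :: "('c,'r,'i,'d) interp \<Rightarrow> ('c,'r) gconcept \<Rightarrow> 'd set" where
  "gconi I (PosC B) = basici I B"
| "gconi I (NegC B) = - basici I B"

fun grolei :: "('c,'r,'i,'d) interp \<Rightarrow> 'r grole \<Rightarrow> ('d \<times> 'd) set" where
  "grolei I (PosR R) = rolei I R"
| "grolei I (NegR R) = - rolei I R"

fun sat_axiom :: "('c,'r,'i,'d) interp \<Rightarrow> ('c,'r) axiom \<Rightarrow> bool" where
  "sat_axiom I (CIncl B C) = (basici I B \<subseteq> gconi I C)"
| "sat_axiom I (RIncl R S) = (rolei I R \<subseteq> grolei I S)"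

fun sat_assertion :: "('c,'r,'i,'d) interp \<Rightarrow> ('c,'r,'i) assertion \<Rightarrow> bool" where
  "sat_assertion I (CAss A a) = (indI I a \<in> conI I A)"
| "sat_assertion I (RAss r a b) = ((indI I a, indI I b) \<in> roleI I r)"

fun sat_atom :: "('c,'r,'i,'d) interp \<Rightarrow> ('v \<Rightarrow> 'd) \<Rightarrow> ('c,'r,'v) atom \<Rightarrow> bool" where
  "sat_atom I h (CAtom A x) = (h x \<in> conI I A)"
| "sat_atom I h (RAtom r x y) = ((h x, h y) \<in> roleI I r)"

definition tmodel :: "('c,'r) axiom set \<Rightarrow> ('c,'r,'i,'d) interp \<Rightarrow> bool" where
  "tmodel T I = (\<forall>ax\<in>T. sat_axiom I ax)"

definition model :: "('c,'r) axiom set \<Rightarrow> ('c,'r,'i) assertion set \<Rightarrow> ('c,'r,'i,'d) interp \<Rightarrow> bool" where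
  "model T A I = (tmodel T I \<and> (\<forall>f\<in>A. sat_assertion I f))"

definition holds_q :: "('c,'r,'v) atom set \<Rightarrow> ('c,'r,'i,'d) interp \<Rightarrow> bool" where
  "holds_q q I = (\<exists>h. \<forall>\<alpha>\<in>q. sat_atom I h \<alpha>)"

text \<open>Models of KBs are taken with domain type 'i \<times> 'r role list (the type of the
  words of the canonical model), which contains a copy of every canonical model, so
  entailment over these models coincides with entailment over all models.\<close>
type_synonym ('c,'r,'i) kinterp = "('c,'r,'i,'i \<times> 'r role list) interp"

text \<open>Models of TBoxes alone: domain type 'r role list (large enough for the
  canonical model of a single basic concept).\<close>
type_synonym ('c,'r) tinterp = "('c,'r,unit,'r role list) interp"

definition entails :: "('c,'r) axiom set \<Rightarrow> ('c,'r,'i) assertion set \<Rightarrow> ('c,'r,'v) atom set \<Rightarrow> bool" where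
  "entails T A q = (\<forall>I :: ('c,'r,'i) kinterp. model T A I \<longrightarrow> holds_q q I)"

definition consistent :: "('c,'r) axiom set \<Rightarrow> ('c,'r,'i) assertion set \<Rightarrow> bool" where
  "consistent T A = (\<exists>I :: ('c,'r,'i) kinterp. model T A I)"

definition tent_ci :: "('c,'r) axiom set \<Rightarrow> ('c,'r) basic \<Rightarrow> ('c,'r) gconcept \<Rightarrow> bool" where
  "tent_ci T B C = (\<forall>I :: ('c,'r) tinterp. tmodel T I \<longrightarrow> basici I B \<subseteq> gconi I C)"

definition tent_ri :: "('c,'r) axiom set \<Rightarrow> 'r role \<Rightarrow> 'r grole \<Rightarrow> bool" where
  "tent_ri T R S = (\<forall>I :: ('c,'r) tinterp. tmodel T I \<longrightarrow> rolei I R \<subseteq> grolei I S)"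

definition kb_ent_con :: "('c,'r) axiom set \<Rightarrow> ('c,'r,'i) assertion set \<Rightarrow> 'c \<Rightarrow> 'i \<Rightarrow> bool" where
  "kb_ent_con T A Ac a = (\<forall>I :: ('c,'r,'i) kinterp. model T A I \<longrightarrow> indI I a \<in> conI I Ac)"

definition kb_ent_ex :: "('c,'r) axiom set \<Rightarrow> ('c,'r,'i) assertion set \<Rightarrow> 'r role \<Rightarrow> 'i \<Rightarrow> bool" where
  "kb_ent_ex T A R a = (\<forall>I :: ('c,'r,'i) kinterp. model T A I \<longrightarrow> indI I a \<in> basici I (Ex R))"

definition kb_ent_role :: "('c,'r) axiom set \<Rightarrow> ('c,'r,'i) assertion set \<Rightarrow> 'r role \<Rightarrow> 'i \<Rightarrow> 'i \<Rightarrow> bool" where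
  "kb_ent_role T A R a b = (\<forall>I :: ('c,'r,'i) kinterp. model T A I \<longrightarrow> (indI I a, indI I b) \<in> rolei I R)"

definition min_supports :: "('c,'r) axiom set \<Rightarrow> ('c,'r,'v) atom set \<Rightarrow> ('c,'r,'i) assertion set \<Rightarrow> ('c,'r,'i) assertion set set" where
  "min_supports T q A = {S. S \<subseteq> A \<and> entails T S q \<and> (\<forall>S'. S' \<subset> S \<longrightarrow> \<not> entails T S' q)}"

definition num_ms :: "('c,'r) axiom set \<Rightarrow> ('c,'r,'v) atom set \<Rightarrow> ('c,'r,'i) assertion set \<Rightarrow> nat" where
  "num_ms T q A = card (min_supports T q A)"

definition cm_dom :: "('c,'r) axiom set \<Rightarrow> ('c,'r,'i) assertion set \<Rightarrow> 'i \<times> 'r role list \<Rightarrow> bool" where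
  "cm_dom T A w = (fst w \<in> constA A \<and>
     (snd w \<noteq> [] \<longrightarrow>
        kb_ent_ex T A (hd (snd w)) (fst w) \<and>
        \<not> (\<exists>b\<in>constA A. kb_ent_role T A (hd (snd w)) (fst w) b) \<and>
        (\<forall>i. Suc i < length (snd w) \<longrightarrow>
           tent_ci T (Ex (inv (snd w ! i))) (PosC (Ex (snd w ! Suc i))) \<and>
           inv (snd w ! i) \<noteq> snd w ! Suc i)))"

definition cm_con :: "('c,'r) axiom set \<Rightarrow> ('c,'r,'i) assertion set \<Rightarrow> 'c \<Rightarrow> 'i \<times> 'r role list \<Rightarrow> bool" where
  "cm_con T A Ac w = (cm_dom T A w \<and>
     (if snd w = [] then kb_ent_con T A Ac (fst w)
      else tent_ci T (Ex (inv (last (snd w)))) (PosC (AC Ac))))"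

definition cm_role :: "('c,'r) axiom set \<Rightarrow> ('c,'r,'i) assertion set \<Rightarrow> 'r \<Rightarrow> 'i \<times> 'r role list \<Rightarrow> 'i \<times> 'r role list \<Rightarrow> bool" where
  "cm_role T A r w w' = (cm_dom T A w \<and> cm_dom T A w' \<and>
     ((snd w = [] \<and> snd w' = [] \<and> kb_ent_role T A (RN r) (fst w) (fst w')) \<or>
      (\<exists>R'. fst w' = fst w \<and> snd w' = snd w @ [R'] \<and> tent_ri T R' (PosR (RN r))) \<or>
      (\<exists>R'. fst w = fst w' \<and> snd w = snd w' @ [R'] \<and> tent_ri T R' (PosR (Inv r)))))"

fun cm_atom :: "('c,'r) axiom set \<Rightarrow> ('c,'r,'i) assertion set \<Rightarrow> ('v \<Rightarrow> 'i \<times> 'r role list) \<Rightarrow> ('c,'r,'v) atom \<Rightarrow> bool" where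
  "cm_atom T A h (CAtom Ac x) = cm_con T A Ac (h x)"
| "cm_atom T A h (RAtom r x y) = cm_role T A r (h x) (h y)"

text \<open>mu : vars(alpha) to const(f) plus the special symbol, encoded as 'v \<Rightarrow> 'i option
  with None for the special symbol; only its values on vars(alpha) matter.\<close>
definition valid_mu :: "('c,'r,'i) assertion \<Rightarrow> ('c,'r,'v) atom \<Rightarrow> ('v \<Rightarrow> 'i option) \<Rightarrow> bool" where
  "valid_mu f \<alpha> \<mu> = (\<forall>x\<in>avars \<alpha>. \<mu> x = None \<or> (\<exists>c\<in>acon f. \<mu> x = Some c))"

definition ent_mu :: "('c,'r) axiom set \<Rightarrow> ('c,'r,'i) assertion \<Rightarrow> ('c,'r,'v) atom \<Rightarrow> ('v \<Rightarrow> 'i option) \<Rightarrow> bool" where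
  "ent_mu T f \<alpha> \<mu> = (\<exists>h. (\<forall>x\<in>avars \<alpha>. (case \<mu> x of Some c \<Rightarrow> h x = (c, []) | None \<Rightarrow> snd (h x) \<noteq> []))
                         \<and> cm_atom T {f} h \<alpha>)"

definition interaction_free :: "('c,'r) axiom set \<Rightarrow> ('c,'r,'v) atom set \<Rightarrow> 'i itself \<Rightarrow> bool" where
  "interaction_free T q (_ :: 'i itself) =
     (\<forall>f :: ('c,'r,'i) assertion. consistent T {f} \<longrightarrow>
        (\<forall>\<alpha>\<in>q. \<forall>\<beta>\<in>q. \<forall>\<mu>\<alpha> \<mu>\<beta>.
           valid_mu f \<alpha> \<mu>\<alpha> \<and> valid_mu f \<beta> \<mu>\<beta> \<and> ent_mu T f \<alpha> \<mu>\<alpha> \<and> ent_mu T f \<beta> \<mu>\<beta> \<longrightarrow>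
           \<alpha> = \<beta> \<and> (\<forall>x\<in>avars \<alpha>. \<mu>\<alpha> x = \<mu>\<beta> x)))"

end

theory Submission
  imports Defs
begin

lemma rolei_inv[simp]: "rolei I (inv R) = (rolei I R)\<inverse>"
  by (cases R) auto

lemma inv_inv[simp]: "inv (inv R) = R" by (cases R) auto

definition pb :: "('c,'r,'i,'d) interp \<Rightarrow> ('r role list \<Rightarrow> 'd) \<Rightarrow> ('c,'r) tinterp" where
  "pb I g = \<lparr>conI = (\<lambda>A. g -` conI I A), roleI = (\<lambda>r. {(x,y). (g x, g y) \<in> roleI I r}), indI = (\<lambda>_. [])\<rparr>"

lemma pb_rolei: "rolei (pb I g) R = {(x,y). (g x, g y) \<in> rolei I R}"
  by (cases R) (auto simp: pb_def)

fun gw :: "('d \<Rightarrow> 'r role \<Rightarrow> 'd) \<Rightarrow> 'd \<Rightarrow> 'r role list \<Rightarrow> 'd" where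
  "gw w d [] = d"
| "gw w d (R # xs) = w (gw w d xs) R"

definition wclosed :: "('c,'r,'i,'d) interp \<Rightarrow> ('d \<Rightarrow> 'r role \<Rightarrow> 'd) \<Rightarrow> bool" where
  "wclosed I w = (\<forall>x R. x \<in> Domain (rolei I R) \<longrightarrow> (x, w x R) \<in> rolei I R)"

lemma pb_basici:
  assumes "wclosed I w"
  shows "basici (pb I (gw w d)) B = gw w d -` basici I B"
proof (cases B)
  case (AC A) then show ?thesis by (simp add: pb_def)
next
  case (Ex R)
  show ?thesis
  proof
    show "basici (pb I (gw w d)) B \<subseteq> gw w d -` basici I B"
      using Ex by (auto simp: pb_rolei)
  next
    show "gw w d -` basici I B \<subseteq> basici (pb I (gw w d)) B"
    proof
      fix x assume "x \<in> gw w d -` basici I B"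
      then have "gw w d x \<in> Domain (rolei I R)" using Ex by simp
      then have "(gw w d x, gw w d (R # x)) \<in> rolei I R" using assms by (simp add: wclosed_def)
      then have "(x, R # x) \<in> rolei (pb I (gw w d)) R" by (simp add: pb_rolei)
      then show "x \<in> basici (pb I (gw w d)) B" using Ex by auto
    qed
  qed
qed

lemma pb_gconi: "wclosed I w \<Longrightarrow> gconi (pb I (gw w d)) C = gw w d -` gconi I C"
  by (cases C) (auto simp: pb_basici)

lemma pb_grolei: "grolei (pb I g) S = {(x,y). (g x, g y) \<in> grolei I S}"
  by (cases S) (auto simp: pb_rolei)

lemma pb_tmodel:
  assumes "wclosed I w" "tmodel T I"
  shows "tmodel T (pb I (gw w d))"
  unfolding tmodel_def
proof
  fix ax assume "ax \<in> T"
  then have "sat_axiom I ax" using assms(2) by (simp add: tmodel_def)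
  then show "sat_axiom (pb I (gw w d)) ax"
    by (cases ax) (auto simp: pb_basici[OF assms(1)] pb_gconi[OF assms(1)] pb_rolei pb_grolei)
qed

lemma tent_ci_D:
  assumes "tent_ci T B C" "tmodel T I" "x \<in> basici I B"
  shows "x \<in> gconi I C"
proof -
  define w where "w = (\<lambda>x R. SOME y. (x,y) \<in> rolei I R)"
  have wc: "wclosed I w" unfolding wclosed_def w_def by (auto intro: someI)
  have "tmodel T (pb I (gw w x))" using pb_tmodel[OF wc assms(2)] .
  moreover have "[] \<in> basici (pb I (gw w x)) B" using assms(3) by (simp add: pb_basici[OF wc])
  ultimately have "[] \<in> gconi (pb I (gw w x)) C" using assms(1) unfolding tent_ci_def by blast
  then show ?thesis by (simp add: pb_gconi[OF wc])
qed

lemma tent_ri_D: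
  assumes "tent_ri T R S" "tmodel T I" "(x,y) \<in> rolei I R"
  shows "(x,y) \<in> grolei I S"
proof -
  define w where "w = (\<lambda>u R'. if u = x \<and> R' = R then y else SOME v. (u,v) \<in> rolei I R')"
  have wc: "wclosed I w" unfolding wclosed_def w_def using assms(3) by (auto intro: someI)
  have "tmodel T (pb I (gw w x))" using pb_tmodel[OF wc assms(2)] .
  moreover have "([], [R]) \<in> rolei (pb I (gw w x)) R" using assms(3) by (simp add: pb_rolei w_def)
  ultimately have "([], [R]) \<in> grolei (pb I (gw w x)) S" using assms(1) unfolding tent_ri_def by blast
  then show ?thesis by (simp add: pb_grolei w_def)
qed

lemma tent_ci_P: "tent_ci T B (PosC B') \<Longrightarrow> tmodel T I \<Longrightarrow> x \<in> basici I B \<Longrightarrow> x \<in> basici I B'"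
  using tent_ci_D by fastforce
lemma tent_ri_P: "tent_ri T R (PosR R') \<Longrightarrow> tmodel T I \<Longrightarrow> (x,y) \<in> rolei I R \<Longrightarrow> (x,y) \<in> rolei I R'"
  using tent_ri_D by fastforce

lemma tent_ci_refl: "tent_ci T B (PosC B)" by (simp add: tent_ci_def)
lemma tent_ci_trans: "tent_ci T B (PosC B') \<Longrightarrow> tent_ci T B' C \<Longrightarrow> tent_ci T B C"
  unfolding tent_ci_def by (metis gconi.simps(1) subset_trans)
lemma tent_ci_ax: "CIncl B C \<in> T \<Longrightarrow> tent_ci T B C"
  unfolding tent_ci_def tmodel_def by fastforce
lemma tent_ri_refl: "tent_ri T R (PosR R)" by (simp add: tent_ri_def)
lemma tent_ri_trans: "tent_ri T R (PosR R') \<Longrightarrow> tent_ri T R' S \<Longrightarrow> tent_ri T R S"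
  unfolding tent_ri_def by (metis grolei.simps(1) subset_trans)
lemma tent_ri_ax: "RIncl R S \<in> T \<Longrightarrow> tent_ri T R S"
  unfolding tent_ri_def tmodel_def by fastforce
lemma tent_ri_inv: "tent_ri T R (PosR R') \<Longrightarrow> tent_ri T (inv R) (PosR (inv R'))"
  unfolding tent_ri_def by auto
lemma tent_ri_ex: "tent_ri T R (PosR R') \<Longrightarrow> tent_ci T (Ex R) (PosC (Ex R'))"
  unfolding tent_ri_def tent_ci_def by fastforce
lemma tent_ri_inv_ex: "tent_ri T R (PosR (inv R')) \<Longrightarrow> tent_ci T (Ex (inv R)) (PosC (Ex R'))"
  unfolding tent_ri_def tent_ci_def by fastforce


fun base_b :: "('c,'r,'i) assertion \<Rightarrow> 'i \<Rightarrow> ('c,'r) basic \<Rightarrow> bool" where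
  "base_b (CAss A b) a B = (b = a \<and> B = AC A)"
| "base_b (RAss r b c) a B = ((b = a \<and> B = Ex (RN r)) \<or> (c = a \<and> B = Ex (Inv r)))"

fun base_r :: "('c,'r,'i) assertion \<Rightarrow> 'i \<Rightarrow> 'i \<Rightarrow> 'r role \<Rightarrow> bool" where
  "base_r (CAss A b) a c R = False"
| "base_r (RAss r b c) a d R = ((b = a \<and> c = d \<and> R = RN r) \<or> (c = a \<and> b = d \<and> R = Inv r))"

definition sb :: "('c,'r) axiom set \<Rightarrow> ('c,'r,'i) assertion set \<Rightarrow> ('c,'r) basic \<Rightarrow> 'i \<Rightarrow> bool" where
  "sb T S B a = (\<exists>g\<in>S. \<exists>B0. base_b g a B0 \<and> tent_ci T B0 (PosC B))"

definition sr :: "('c,'r) axiom set \<Rightarrow> ('c,'r,'i) assertion set \<Rightarrow> 'r role \<Rightarrow> 'i \<Rightarrow> 'i \<Rightarrow> bool" where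
  "sr T S R a b = (\<exists>g\<in>S. \<exists>R0. base_r g a b R0 \<and> tent_ri T R0 (PosR R))"

lemma base_b_acon: "base_b g a B \<Longrightarrow> a \<in> acon g"
  by (cases g) auto
lemma base_r_acon: "base_r g a b R \<Longrightarrow> a \<in> acon g \<and> b \<in> acon g"
  by (cases g) auto

lemma constA_single[simp]: "constA {g} = acon g" by (simp add: constA_def)
lemma constA_mono: "S \<subseteq> S' \<Longrightarrow> constA S \<subseteq> constA S'" by (auto simp: constA_def)

lemma sb_const: "sb T S B a \<Longrightarrow> a \<in> constA S"
  unfolding sb_def constA_def using base_b_acon by fastforce
lemma sr_const: "sr T S R a b \<Longrightarrow> a \<in> constA S \<and> b \<in> constA S"
  unfolding sr_def constA_def using base_r_acon by fastforce

lemma sb_single: "sb T S B a = (\<exists>g\<in>S. sb T {g} B a)"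
  unfolding sb_def by auto
lemma sr_single: "sr T S R a b = (\<exists>g\<in>S. sr T {g} R a b)"
  unfolding sr_def by auto
lemma sb_mono: "sb T S B a \<Longrightarrow> S \<subseteq> S' \<Longrightarrow> sb T S' B a"
  unfolding sb_def by auto
lemma sr_mono: "sr T S R a b \<Longrightarrow> S \<subseteq> S' \<Longrightarrow> sr T S' R a b"
  unfolding sr_def by auto

lemma base_r_inv: "base_r g a b R \<Longrightarrow> base_r g b a (inv R)"
  by (cases g) auto

lemma sr_inv: "sr T S R a b \<Longrightarrow> sr T S (inv R) b a"
proof -
  assume "sr T S R a b"
  then obtain g R0 where g: "g \<in> S" "base_r g a b R0" "tent_ri T R0 (PosR R)" unfolding sr_def by blast
  have "base_r g b a (inv R0)" using g(2) by (rule base_r_inv)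
  moreover have "tent_ri T (inv R0) (PosR (inv R))" using g(3) by (rule tent_ri_inv)
  ultimately show ?thesis unfolding sr_def using g(1) by blast
qed

lemma sr_RN_Inv: "sr T S (RN r) b a = sr T S (Inv r) a b"
proof
  assume "sr T S (RN r) b a"
  from sr_inv[OF this] show "sr T S (Inv r) a b" by simp
next
  assume "sr T S (Inv r) a b"
  from sr_inv[OF this] show "sr T S (RN r) b a" by simp
qed

lemma sr_sb: "sr T S R a b \<Longrightarrow> sb T S (Ex R) a"
proof -
  assume "sr T S R a b"
  then obtain g R0 where g: "g \<in> S" "base_r g a b R0" "tent_ri T R0 (PosR R)" unfolding sr_def by blast
  have "base_b g a (Ex R0)" using g(2) by (cases g) auto
  moreover have "tent_ci T (Ex R0) (PosC (Ex R))" using g(3) by (rule tent_ri_ex)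
  ultimately show ?thesis unfolding sb_def using g(1) by blast
qed

lemma sb_trans: "sb T S B a \<Longrightarrow> tent_ci T B (PosC B') \<Longrightarrow> sb T S B' a"
  unfolding sb_def by (meson tent_ci_trans)
lemma sr_trans: "sr T S R a b \<Longrightarrow> tent_ri T R (PosR R') \<Longrightarrow> sr T S R' a b"
  unfolding sr_def by (meson tent_ri_trans)

lemma base_b_sound: "model T S I \<Longrightarrow> g \<in> S \<Longrightarrow> base_b g a B \<Longrightarrow> indI I a \<in> basici I B"
proof -
  assume "model T S I" "g \<in> S" and b: "base_b g a B"
  then have s: "sat_assertion I g" by (simp add: model_def)
  show ?thesis
  proof (cases g)
    case (CAss A c) then show ?thesis using s b by simp
  next
    case (RAss r c d) then show ?thesis using s b by (auto simp: Domain_iff)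
  qed
qed
lemma base_r_sound: "model T S I \<Longrightarrow> g \<in> S \<Longrightarrow> base_r g a b R \<Longrightarrow> (indI I a, indI I b) \<in> rolei I R"
proof -
  assume "model T S I" "g \<in> S" and b: "base_r g a b R"
  then have s: "sat_assertion I g" by (simp add: model_def)
  show ?thesis
  proof (cases g)
    case (CAss A c) then show ?thesis using s b by simp
  next
    case (RAss r c d) then show ?thesis using s b by auto
  qed
qed

lemma sb_sound: "model T S I \<Longrightarrow> sb T S B a \<Longrightarrow> indI I a \<in> basici I B"
proof -
  assume m: "model T S I" and sb: "sb T S B a"
  from sb obtain g B0 where g: "g \<in> S" "base_b g a B0" "tent_ci T B0 (PosC B)" unfolding sb_def by blast
  have i: "indI I a \<in> basici I B0" using base_b_sound[OF m g(1,2)] .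
  have "tmodel T I" using m by (simp add: model_def)
  from tent_ci_P[OF g(3) this i] show ?thesis .
qed
lemma sr_sound: "model T S I \<Longrightarrow> sr T S R a b \<Longrightarrow> (indI I a, indI I b) \<in> rolei I R"
proof -
  assume m: "model T S I" and sr: "sr T S R a b"
  from sr obtain g R0 where g: "g \<in> S" "base_r g a b R0" "tent_ri T R0 (PosR R)" unfolding sr_def by blast
  have i: "(indI I a, indI I b) \<in> rolei I R0" using base_r_sound[OF m g(1,2)] .
  have "tmodel T I" using m by (simp add: model_def)
  from tent_ri_P[OF g(3) this i] show ?thesis .
qed

definition chain :: "('c,'r) axiom set \<Rightarrow> 'r role list \<Rightarrow> bool" where
  "chain T ws = (\<forall>i. Suc i < length ws \<longrightarrow> tent_ci T (Ex (inv (ws ! i))) (PosC (Ex (ws ! Suc i))) \<and> inv (ws ! i) \<noteq> ws ! Suc i)"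

lemma chain_snoc: "chain T (p @ [x]) = (chain T p \<and> (p \<noteq> [] \<longrightarrow> tent_ci T (Ex (inv (last p))) (PosC (Ex x)) \<and> inv (last p) \<noteq> x))"
proof
  assume c: "chain T (p @ [x])"
  have "chain T p" unfolding chain_def
  proof (intro allI impI)
    fix i assume "Suc i < length p"
    then show "tent_ci T (Ex (inv (p ! i))) (PosC (Ex (p ! Suc i))) \<and> inv (p ! i) \<noteq> p ! Suc i"
      using c unfolding chain_def by (auto simp: nth_append dest: spec[of _ i])
  qed
  moreover have "p \<noteq> [] \<longrightarrow> tent_ci T (Ex (inv (last p))) (PosC (Ex x)) \<and> inv (last p) \<noteq> x"
  proof
    assume "p \<noteq> []"
    then have "Suc (length p - 1) < length (p @ [x])" "(p @ [x]) ! (length p - 1) = last p"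
      "(p @ [x]) ! Suc (length p - 1) = x"
      by (auto simp: nth_append last_conv_nth)
    then show "tent_ci T (Ex (inv (last p))) (PosC (Ex x)) \<and> inv (last p) \<noteq> x"
      using c unfolding chain_def by metis
  qed
  ultimately show "chain T p \<and> (p \<noteq> [] \<longrightarrow> tent_ci T (Ex (inv (last p))) (PosC (Ex x)) \<and> inv (last p) \<noteq> x)" by blast
next
  assume c: "chain T p \<and> (p \<noteq> [] \<longrightarrow> tent_ci T (Ex (inv (last p))) (PosC (Ex x)) \<and> inv (last p) \<noteq> x)"
  show "chain T (p @ [x])" unfolding chain_def
  proof (intro allI impI)
    fix i assume i: "Suc i < length (p @ [x])"
    show "tent_ci T (Ex (inv ((p @ [x]) ! i))) (PosC (Ex ((p @ [x]) ! Suc i))) \<and> inv ((p @ [x]) ! i) \<noteq> (p @ [x]) ! Suc i"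
    proof (cases "Suc i < length p")
      case True
      then show ?thesis using c unfolding chain_def by (auto simp: nth_append)
    next
      case False
      then have "Suc i = length p" using i by simp
      then have pne: "p \<noteq> []" and ii: "i = length p - 1" by auto
      then have "(p @ [x]) ! i = last p" "(p @ [x]) ! Suc i = x"
        using \<open>Suc i = length p\<close> by (auto simp: nth_append last_conv_nth)
      then show ?thesis using c pne by simp
    qed
  qed
qed

lemma chain_single[simp]: "chain T [x]" by (simp add: chain_def)

definition dom2 :: "('c,'r) axiom set \<Rightarrow> ('c,'r,'i) assertion set \<Rightarrow> 'i \<times> 'r role list \<Rightarrow> bool" where
  "dom2 T S w = (fst w \<in> constA S \<and>
     (snd w \<noteq> [] \<longrightarrow> sb T S (Ex (hd (snd w))) (fst w) \<and>
        \<not> (\<exists>b\<in>constA S. sr T S (hd (snd w)) (fst w) b) \<and> chain T (snd w)))"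

definition con2 :: "('c,'r) axiom set \<Rightarrow> ('c,'r,'i) assertion set \<Rightarrow> 'c \<Rightarrow> 'i \<times> 'r role list \<Rightarrow> bool" where
  "con2 T S Ac w = (dom2 T S w \<and>
     (if snd w = [] then sb T S (AC Ac) (fst w)
      else tent_ci T (Ex (inv (last (snd w)))) (PosC (AC Ac))))"

definition role2 :: "('c,'r) axiom set \<Rightarrow> ('c,'r,'i) assertion set \<Rightarrow> 'r \<Rightarrow> 'i \<times> 'r role list \<Rightarrow> 'i \<times> 'r role list \<Rightarrow> bool" where
  "role2 T S r w w' = (dom2 T S w \<and> dom2 T S w' \<and>
     ((snd w = [] \<and> snd w' = [] \<and> sr T S (RN r) (fst w) (fst w')) \<or>
      (\<exists>R'. fst w' = fst w \<and> snd w' = snd w @ [R'] \<and> tent_ri T R' (PosR (RN r))) \<or>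
      (\<exists>R'. fst w = fst w' \<and> snd w = snd w' @ [R'] \<and> tent_ri T R' (PosR (Inv r)))))"

definition inR :: "('c,'r) axiom set \<Rightarrow> ('c,'r,'i) assertion set \<Rightarrow> 'r role \<Rightarrow> 'i \<times> 'r role list \<Rightarrow> 'i \<times> 'r role list \<Rightarrow> bool" where
  "inR T S R w w' = (dom2 T S w \<and> dom2 T S w' \<and>
     ((snd w = [] \<and> snd w' = [] \<and> sr T S R (fst w) (fst w')) \<or>
      (\<exists>R'. fst w' = fst w \<and> snd w' = snd w @ [R'] \<and> tent_ri T R' (PosR R)) \<or>
      (\<exists>R'. fst w = fst w' \<and> snd w = snd w' @ [R'] \<and> tent_ri T R' (PosR (inv R)))))"

definition inB :: "('c,'r) axiom set \<Rightarrow> ('c,'r,'i) assertion set \<Rightarrow> ('c,'r) basic \<Rightarrow> 'i \<times> 'r role list \<Rightarrow> bool" where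
  "inB T S B w = (dom2 T S w \<and>
     (if snd w = [] then sb T S B (fst w) else tent_ci T (Ex (inv (last (snd w)))) (PosC B)))"

definition CM2 :: "('c,'r) axiom set \<Rightarrow> ('c,'r,'i) assertion set \<Rightarrow> ('c,'r,'i) kinterp" where
  "CM2 T S = \<lparr>conI = (\<lambda>A. {w. con2 T S A w}), roleI = (\<lambda>r. {(w,w'). role2 T S r w w'}), indI = (\<lambda>a. (a,[]))\<rparr>"

lemma CM2_rolei: "((w,w') \<in> rolei (CM2 T S) R) = inR T S R w w'"
  by (cases R) (auto simp: CM2_def role2_def inR_def sr_RN_Inv)

lemma dom2_prefix: assumes "dom2 T S (a, p @ [x])" shows "dom2 T S (a, p)"
proof -
  have "chain T (p @ [x])" if "p \<noteq> []" using assms that by (simp add: dom2_def)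
  then have "chain T p" if "p \<noteq> []" using that chain_snoc[of T p x] by blast
  then show ?thesis using assms by (cases p) (auto simp: dom2_def)
qed

lemma dom2_snoc: "dom2 T S (a, p) \<Longrightarrow> p \<noteq> [] \<Longrightarrow> tent_ci T (Ex (inv (last p))) (PosC (Ex x)) \<Longrightarrow>
   inv (last p) \<noteq> x \<Longrightarrow> dom2 T S (a, p @ [x])"
  unfolding dom2_def by (auto simp: chain_snoc)

lemma dom2_single: "a \<in> constA S \<Longrightarrow> sb T S (Ex R) a \<Longrightarrow> \<not> (\<exists>b\<in>constA S. sr T S R a b) \<Longrightarrow> dom2 T S (a, [R])"
  unfolding dom2_def by auto

lemma dom2_chain_last: "dom2 T S (a, p @ [x]) \<Longrightarrow> p \<noteq> [] \<Longrightarrow> tent_ci T (Ex (inv (last p))) (PosC (Ex x))"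
  unfolding dom2_def by (auto simp: chain_snoc)

lemma inR_ex: "(\<exists>w'. inR T S R w w') = inB T S (Ex R) w"
proof
  assume "\<exists>w'. inR T S R w w'"
  then obtain w' where r: "inR T S R w w'" by blast
  obtain a ws where w: "w = (a, ws)" by fastforce
  obtain b ws' where w': "w' = (b, ws')" by fastforce
  have d: "dom2 T S w" "dom2 T S w'" using r by (auto simp: inR_def)
  consider (n) "ws = []" "ws' = []" "sr T S R a b"
    | (c) R' where "b = a" "ws' = ws @ [R']" "tent_ri T R' (PosR R)"
    | (p) R' where "a = b" "ws = ws' @ [R']" "tent_ri T R' (PosR (inv R))"
    using r w w' by (auto simp: inR_def)
  then show "inB T S (Ex R) w"
  proof cases
    case n then show ?thesis using d w by (simp add: inB_def sr_sb)
  next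
    case c
    show ?thesis
    proof (cases "ws = []")
      case True
      then have "sb T S (Ex R') a" using d(2) c w' by (simp add: dom2_def)
      then have "sb T S (Ex R) a" by (rule sb_trans[OF _ tent_ri_ex[OF c(3)]])
      then show ?thesis using d True w by (simp add: inB_def)
    next
      case False
      then have "tent_ci T (Ex (inv (last ws))) (PosC (Ex R'))" using dom2_chain_last[of T S a ws R'] d(2) c w' False by simp
      then have "tent_ci T (Ex (inv (last ws))) (PosC (Ex R))" by (rule tent_ci_trans[OF _ tent_ri_ex[OF c(3)]])
      then show ?thesis using d False w by (simp add: inB_def)
    qed
  next
    case p
    then have "tent_ci T (Ex (inv R')) (PosC (Ex R))" using tent_ri_inv_ex[OF p(3)] by simp
    then show ?thesis using d w p by (simp add: inB_def)
  qed
next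
  assume b: "inB T S (Ex R) w"
  obtain a ws where w: "w = (a, ws)" by fastforce
  have d: "dom2 T S (a, ws)" using b w by (simp add: inB_def)
  show "\<exists>w'. inR T S R w w'"
  proof (cases "ws = []")
    case True
    then have s: "sb T S (Ex R) a" using b w by (simp add: inB_def)
    show ?thesis
    proof (cases "\<exists>c\<in>constA S. sr T S R a c")
      case True
      then obtain c where "c \<in> constA S" "sr T S R a c" by blast
      moreover have "dom2 T S (c, [])" using \<open>c \<in> constA S\<close> by (simp add: dom2_def)
      moreover have "dom2 T S w" "snd w = []" "fst w = a" using d w \<open>ws = []\<close> by simp_all
      ultimately have "inR T S R w (c, [])" unfolding inR_def by simp
      then show ?thesis by blast
    next
      case False
      have "a \<in> constA S" using d by (simp add: dom2_def)
      then have "dom2 T S (a, [R])" using dom2_single[OF _ s False] by blast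
      moreover have "dom2 T S w" "snd w = []" "fst w = a" using d w \<open>ws = []\<close> by simp_all
      moreover have "tent_ri T R (PosR R)" by (rule tent_ri_refl)
      ultimately have "inR T S R w (a, [R])" unfolding inR_def by simp
      then show ?thesis by blast
    qed
  next
    case False
    then have t: "tent_ci T (Ex (inv (last ws))) (PosC (Ex R))" using b w by (simp add: inB_def)
    show ?thesis
    proof (cases "R = inv (last ws)")
      case True
      have ws: "butlast ws @ [last ws] = ws" using False by simp
      have "dom2 T S (a, butlast ws @ [last ws])" using d ws by simp
      then have "dom2 T S (a, butlast ws)" by (rule dom2_prefix)
      moreover have "tent_ri T (last ws) (PosR (inv R))" using True tent_ri_refl by simp
      moreover have e: "snd w = snd (a, butlast ws) @ [last ws]" "fst w = fst (a, butlast ws)" using w ws by simp_all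
      moreover have "dom2 T S w" using d w by simp
      ultimately have "inR T S R w (a, butlast ws)" unfolding inR_def by blast
      then show ?thesis by blast
    next
      case nR: False
      have "inv (last ws) \<noteq> R" using nR by auto
      then have "dom2 T S (a, ws @ [R])" using dom2_snoc[OF d False t] by simp
      then have "inR T S R w (a, ws @ [R])" using d w tent_ri_refl by (simp add: inR_def)
      then show ?thesis by blast
    qed
  qed
qed

lemma CM2_basici: "(w \<in> basici (CM2 T S) B) = inB T S B w"
proof (cases B)
  case (AC A) then show ?thesis by (simp add: CM2_def con2_def inB_def)
next
  case (Ex R)
  have "(w \<in> basici (CM2 T S) B) = (\<exists>w'. inR T S R w w')"
    using Ex CM2_rolei[of w _ T S R] by (simp only: basici.simps Domain_iff)
  then show ?thesis using inR_ex Ex by simp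
qed


fun phi :: "('c,'r,'i,'d) interp \<Rightarrow> 'i \<Rightarrow> 'r role list \<Rightarrow> 'd" where
  "phi I a [] = indI I a"
| "phi I a (R # rs) = (SOME e. (phi I a rs, e) \<in> rolei I R)"

lemma dom2_edge:
  assumes "dom2 T S (a, ws @ [x])" "model T S I"
  shows "(phi I a (rev ws), phi I a (x # rev ws)) \<in> rolei I x"
  using assms
proof (induction ws arbitrary: x rule: rev_induct)
  case Nil
  then have "sb T S (Ex x) a" by (simp add: dom2_def)
  then have "indI I a \<in> basici I (Ex x)" using sb_sound[OF Nil.prems(2)] by blast
  then obtain e where "(indI I a, e) \<in> rolei I x" by auto
  then show ?case by (auto intro: someI)
next
  case (snoc y p)
  have d1: "dom2 T S (a, p @ [y])" using snoc.prems(1) dom2_prefix[of T S a "p @ [y]" x] by simp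
  have e: "(phi I a (rev p), phi I a (y # rev p)) \<in> rolei I y" using snoc.IH[OF d1 snoc.prems(2)] .
  have t: "tent_ci T (Ex (inv y)) (PosC (Ex x))" using dom2_chain_last[of T S a "p @ [y]" x] snoc.prems(1) by simp
  have tm: "tmodel T I" using snoc.prems(2) by (simp add: model_def)
  have "phi I a (y # rev p) \<in> basici I (Ex (inv y))" using e by auto
  then have "phi I a (y # rev p) \<in> basici I (Ex x)" using tent_ci_P[OF t tm] by blast
  then obtain e' where "(phi I a (y # rev p), e') \<in> rolei I x" by auto
  then show ?case by (auto intro: someI)
qed

lemma rev_last: "ws \<noteq> [] \<Longrightarrow> rev ws = last ws # rev (butlast ws)"
  by (cases ws rule: rev_cases) auto

lemma phi_step:
  assumes "dom2 T S (a, ws)" "ws \<noteq> []" "model T S I"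
  shows "(phi I a (rev (butlast ws)), phi I a (rev ws)) \<in> rolei I (last ws)"
proof -
  have "dom2 T S (a, butlast ws @ [last ws])" using assms by simp
  from dom2_edge[OF this assms(3)] show ?thesis by (simp only: rev_last[OF assms(2)])
qed

lemma inR_cases:
  assumes "inR T S R (a, ws) (b, ws')"
  shows "dom2 T S (a, ws) \<and> dom2 T S (b, ws') \<and>
    ((ws = [] \<and> ws' = [] \<and> sr T S R a b) \<or>
     (ws' \<noteq> [] \<and> length ws' = Suc (length ws) \<and> b = a \<and> butlast ws' = ws \<and> tent_ri T (last ws') (PosR R)) \<or>
     (ws \<noteq> [] \<and> length ws = Suc (length ws') \<and> a = b \<and> butlast ws = ws' \<and> tent_ri T (last ws) (PosR (inv R))))"
  using assms unfolding inR_def by auto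

lemma inR_cases_w:
  assumes "inR T S R (a, ws) (b, ws')"
  shows "dom2 T S (a, ws) \<and> dom2 T S (b, ws') \<and>
    ((ws = [] \<and> ws' = [] \<and> sr T S R a b) \<or>
     (ws' \<noteq> [] \<and> length ws' = Suc (length ws) \<and> tent_ri T (last ws') (PosR R)) \<or>
     (ws \<noteq> [] \<and> length ws = Suc (length ws') \<and> tent_ri T (last ws) (PosR (inv R))))"
  using assms unfolding inR_def by auto

lemma inR_mono_role:
  assumes "inR T S R w w'" "\<And>a b. sr T S R a b \<Longrightarrow> sr T S R' a b"
    "\<And>R''. tent_ri T R'' (PosR R) \<Longrightarrow> tent_ri T R'' (PosR R')"
    "\<And>R''. tent_ri T R'' (PosR (inv R)) \<Longrightarrow> tent_ri T R'' (PosR (inv R'))"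
  shows "inR T S R' w w'"
  using assms(1) unfolding inR_def
  by (elim conjE disjE exE) (simp_all add: assms(2-4))

lemma inR_transfer:
  assumes "inR T S R w w'" "dom2 T S' w" "dom2 T S' w'"
    "snd w = [] \<Longrightarrow> snd w' = [] \<Longrightarrow> sr T S R (fst w) (fst w') \<Longrightarrow> sr T S' R (fst w) (fst w')"
  shows "inR T S' R w w'"
  using assms unfolding inR_def by auto

lemma role2_inR: "role2 T S r w w' = inR T S (RN r) w w'"
  by (simp add: role2_def inR_def)

lemma CM2_model:
  fixes T :: "('c,'r) axiom set" and S :: "('c,'r,'i) assertion set"
  assumes "consistent T S"
  shows "model T S (CM2 T S)"
proof -
  obtain M :: "('c,'r,'i) kinterp" where M: "model T S M" using assms by (auto simp: consistent_def)
  have tM: "tmodel T M" using M by (simp add: model_def)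
  have edge: "\<exists>d e. (d,e) \<in> rolei M (last ws)" if "dom2 T S (a, ws)" "ws \<noteq> []" for a ws
    using phi_step[OF that M] by blast
  have ax: "sat_axiom (CM2 T S) ax" if axT: "ax \<in> T" for ax
  proof (cases ax)
    case (CIncl B C)
    have satM: "sat_axiom M ax" using tM axT by (simp add: tmodel_def)
    show ?thesis
    proof (cases C)
      case (PosC B')
      have tc: "tent_ci T B (PosC B')" using tent_ci_ax[of B C T] axT CIncl PosC by simp
      show ?thesis unfolding CIncl PosC sat_axiom.simps gconi.simps
      proof (rule subsetI)
        fix w assume "w \<in> basici (CM2 T S) B"
        then have "inB T S B w" by (simp add: CM2_basici)
        then have "inB T S B' w" using sb_trans[OF _ tc] tent_ci_trans[OF _ tc] by (auto simp: inB_def)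
        then show "w \<in> basici (CM2 T S) B'" by (simp add: CM2_basici)
      qed
    next
      case (NegC B')
      have tc: "tent_ci T B (NegC B')" using tent_ci_ax[of B C T] axT CIncl NegC by simp
      have Mneg: False if "x \<in> basici M B" "x \<in> basici M B'" for x
        using satM CIncl NegC that by auto
      show ?thesis unfolding CIncl NegC sat_axiom.simps gconi.simps
      proof (rule subsetI)
        fix w assume w1: "w \<in> basici (CM2 T S) B"
        obtain a ws where w: "w = (a, ws)" by fastforce
        show "w \<in> - basici (CM2 T S) B'"
        proof
          assume w2: "w \<in> basici (CM2 T S) B'"
          have i1: "inB T S B (a, ws)" "inB T S B' (a, ws)" using w1 w2 w by (simp_all add: CM2_basici)
          show False
          proof (cases "ws = []")
            case True
            then have "sb T S B a" "sb T S B' a" using i1 by (simp_all add: inB_def)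
            then show False using sb_sound[OF M] Mneg by blast
          next
            case False
            then have t1: "tent_ci T (Ex (inv (last ws))) (PosC B)" "tent_ci T (Ex (inv (last ws))) (PosC B')"
              using i1 by (simp_all add: inB_def)
            have "dom2 T S (a, ws)" using i1 by (simp add: inB_def)
            then obtain d e where "(d,e) \<in> rolei M (last ws)" using edge False by blast
            then have "e \<in> basici M (Ex (inv (last ws)))" by auto
            then show False using tent_ci_P[OF t1(1) tM] tent_ci_P[OF t1(2) tM] Mneg by blast
          qed
        qed
      qed
    qed
  next
    case (RIncl R S0)
    have satM: "sat_axiom M ax" using tM axT by (simp add: tmodel_def)
    show ?thesis
    proof (cases S0)
      case (PosR R')
      have tr: "tent_ri T R (PosR R')" using tent_ri_ax[of R S0 T] axT RIncl PosR by simp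
      have tr2: "tent_ri T (inv R) (PosR (inv R'))" by (rule tent_ri_inv[OF tr])
      show ?thesis unfolding RIncl PosR sat_axiom.simps grolei.simps
      proof (rule subrelI)
        fix w w' assume "(w, w') \<in> rolei (CM2 T S) R"
        then have "inR T S R w w'" by (simp add: CM2_rolei)
        then have "inR T S R' w w'"
          by (rule inR_mono_role[OF _ sr_trans[OF _ tr] tent_ri_trans[OF _ tr] tent_ri_trans[OF _ tr2]])
        then show "(w, w') \<in> rolei (CM2 T S) R'" by (simp add: CM2_rolei)
      qed
    next
      case (NegR R')
      have tr: "tent_ri T R (NegR R')" using tent_ri_ax[of R S0 T] axT RIncl NegR by simp
      have Mneg: False if "(x,y) \<in> rolei M R" "(x,y) \<in> rolei M R'" for x y
        using satM RIncl NegR that by auto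
      show ?thesis unfolding RIncl NegR sat_axiom.simps grolei.simps
      proof (rule subrelI)
        fix w w' assume w1: "(w, w') \<in> rolei (CM2 T S) R"
        obtain a ws where w: "w = (a, ws)" by fastforce
        obtain b ws' where w': "w' = (b, ws')" by fastforce
        show "(w, w') \<in> - rolei (CM2 T S) R'"
        proof
          assume w2: "(w, w') \<in> rolei (CM2 T S) R'"
          have c1: "inR T S R (a, ws) (b, ws')" using w1 w w' by (simp add: CM2_rolei)
          have c2: "inR T S R' (a, ws) (b, ws')" using w2 w w' by (simp add: CM2_rolei)
          note C1 = inR_cases_w[OF c1] and C2 = inR_cases_w[OF c2]
          consider (n) "ws = []" "ws' = []" "sr T S R a b" "sr T S R' a b"
            | (c) "ws' \<noteq> []" "tent_ri T (last ws') (PosR R)" "tent_ri T (last ws') (PosR R')"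
            | (p) "ws \<noteq> []" "tent_ri T (last ws) (PosR (inv R))" "tent_ri T (last ws) (PosR (inv R'))"
            using C1 C2 by auto
          then show False
          proof cases
            case n
            then show False using sr_sound[OF M] Mneg by blast
          next
            case c
            obtain d e where de: "(d,e) \<in> rolei M (last ws')" using edge C1 c(1) by blast
            show False using tent_ri_P[OF c(2) tM de] tent_ri_P[OF c(3) tM de] Mneg by blast
          next
            case p
            obtain d e where de: "(d,e) \<in> rolei M (last ws)" using edge C1 p(1) by blast
            have "(e,d) \<in> rolei M R" "(e,d) \<in> rolei M R'" using tent_ri_P[OF p(2) tM de] tent_ri_P[OF p(3) tM de] by auto
            then show False by (rule Mneg)
          qed
        qed
      qed
    qed
  qed
  have as: "sat_assertion (CM2 T S) f" if fS: "f \<in> S" for f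
  proof (cases f)
    case (CAss A a)
    have "a \<in> constA S" using fS CAss unfolding constA_def by force
    moreover have "sb T S (AC A) a" unfolding sb_def
      using fS CAss tent_ci_refl[of T "AC A"] by (intro bexI[of _ f] exI[of _ "AC A"]) auto
    ultimately show ?thesis using CAss by (simp add: CM2_def con2_def dom2_def)
  next
    case (RAss r a b)
    have "a \<in> constA S" "b \<in> constA S" using fS RAss unfolding constA_def by force+
    moreover have "sr T S (RN r) a b" unfolding sr_def
      using fS RAss tent_ri_refl[of T "RN r"] by (intro bexI[of _ f] exI[of _ "RN r"]) auto
    ultimately show ?thesis using RAss by (simp add: CM2_def role2_def dom2_def)
  qed
  show ?thesis using ax as by (simp add: model_def tmodel_def)
qed


lemma consistent_sub: "consistent T S \<Longrightarrow> S' \<subseteq> S \<Longrightarrow> consistent T S'"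
  unfolding consistent_def model_def by blast

lemma kb_b_iff:
  fixes T :: "('c,'r) axiom set" and S :: "('c,'r,'i) assertion set"
  assumes "consistent T S"
  shows "(\<forall>I::('c,'r,'i) kinterp. model T S I \<longrightarrow> indI I a \<in> basici I B) = sb T S B a"
proof
  assume "\<forall>I::('c,'r,'i) kinterp. model T S I \<longrightarrow> indI I a \<in> basici I B"
  then have "indI (CM2 T S) a \<in> basici (CM2 T S) B" using CM2_model[OF assms] by blast
  moreover have "indI (CM2 T S) a = (a, [])" by (simp add: CM2_def)
  ultimately have "inB T S B (a, [])" using CM2_basici by metis
  then show "sb T S B a" by (simp add: inB_def)
next
  assume s: "sb T S B a" show "\<forall>I::('c,'r,'i) kinterp. model T S I \<longrightarrow> indI I a \<in> basici I B"
  proof (intro allI impI)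
    fix I :: "('c,'r,'i) kinterp" assume "model T S I"
    from sb_sound[OF this s] show "indI I a \<in> basici I B" .
  qed
qed

lemma kb_ent_con_iff: "consistent T S \<Longrightarrow> kb_ent_con T S A a = sb T S (AC A) a"
  unfolding kb_ent_con_def using kb_b_iff[of T S a "AC A"] by simp
lemma kb_ent_ex_iff: "consistent T S \<Longrightarrow> kb_ent_ex T S R a = sb T S (Ex R) a"
  unfolding kb_ent_ex_def by (rule kb_b_iff)

lemma kb_role_iff:
  fixes T :: "('c,'r) axiom set" and S :: "('c,'r,'i) assertion set"
  assumes "consistent T S"
  shows "kb_ent_role T S R a b = sr T S R a b"
proof
  assume "kb_ent_role T S R a b"
  then have "(indI (CM2 T S) a, indI (CM2 T S) b) \<in> rolei (CM2 T S) R"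
    using CM2_model[OF assms] unfolding kb_ent_role_def by blast
  moreover have "indI (CM2 T S) a = (a, [])" "indI (CM2 T S) b = (b, [])" by (simp_all add: CM2_def)
  ultimately have "inR T S R (a, []) (b, [])" using CM2_rolei by metis
  from inR_cases_w[OF this] show "sr T S R a b" by simp
next
  assume s: "sr T S R a b" show "kb_ent_role T S R a b" unfolding kb_ent_role_def
  proof (intro allI impI)
    fix I :: "('c,'r,'i) kinterp" assume "model T S I"
    from sr_sound[OF this s] show "(indI I a, indI I b) \<in> rolei I R" .
  qed
qed

lemma cm_dom_eq: "consistent T S \<Longrightarrow> cm_dom T S w = dom2 T S w"
  by (simp add: cm_dom_def dom2_def kb_ent_ex_iff kb_role_iff chain_def)

lemma cm_con_eq: "consistent T S \<Longrightarrow> cm_con T S A w = con2 T S A w"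
  by (simp add: cm_con_def con2_def cm_dom_eq kb_ent_con_iff)

lemma cm_role_eq: "consistent T S \<Longrightarrow> cm_role T S r w w' = inR T S (RN r) w w'"
  by (simp add: cm_role_def inR_def cm_dom_eq kb_role_iff)

lemma ent_hom:
  fixes T :: "('c,'r) axiom set" and S :: "('c,'r,'i) assertion set" and q :: "('c,'r,'v) atom set"
  assumes "consistent T S" "entails T S q"
  shows "\<exists>h. \<forall>\<alpha>\<in>q. cm_atom T S h \<alpha>"
proof -
  have "holds_q q (CM2 T S)" using assms(2) CM2_model[OF assms(1)] unfolding entails_def by blast
  then obtain h where h: "\<forall>\<alpha>\<in>q. sat_atom (CM2 T S) h \<alpha>" unfolding holds_q_def by blast
  have "cm_atom T S h \<alpha>" if "\<alpha> \<in> q" for \<alpha>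
    using h that assms(1) by (cases \<alpha>) (auto simp: CM2_def role2_inR cm_con_eq cm_role_eq)
  then show ?thesis by blast
qed

lemma hom_ent:
  fixes T :: "('c,'r) axiom set" and S :: "('c,'r,'i) assertion set" and q :: "('c,'r,'v) atom set"
  assumes cons: "consistent T S" and hq: "\<forall>\<alpha>\<in>q. cm_atom T S h \<alpha>"
  shows "entails T S q"
  unfolding entails_def holds_q_def
proof (intro allI impI)
  fix I :: "('c,'r,'i) kinterp" assume M: "model T S I"
  have tI: "tmodel T I" using M by (simp add: model_def)
  define h' where "h' = (\<lambda>x. phi I (fst (h x)) (rev (snd (h x))))"
  have "sat_atom I h' \<alpha>" if "\<alpha> \<in> q" for \<alpha>
  proof (cases \<alpha>)
    case (CAtom A x)
    obtain a ws where hx: "h x = (a, ws)" by fastforce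
    have c: "con2 T S A (a, ws)" using hq[rule_format, OF that] CAtom hx cons by (simp add: cm_con_eq)
    show ?thesis
    proof (cases "ws = []")
      case True
      then have "sb T S (AC A) a" using c by (simp add: con2_def)
      from sb_sound[OF M this] show ?thesis using CAtom hx True by (simp add: h'_def)
    next
      case False
      have d: "dom2 T S (a, ws)" using c by (simp add: con2_def)
      have t: "tent_ci T (Ex (inv (last ws))) (PosC (AC A))" using c False by (simp add: con2_def)
      have "(phi I a (rev (butlast ws)), phi I a (rev ws)) \<in> rolei I (last ws)" by (rule phi_step[OF d False M])
      then have "phi I a (rev ws) \<in> basici I (Ex (inv (last ws)))" by auto
      from tent_ci_P[OF t tI this] show ?thesis using CAtom hx by (simp add: h'_def)
    qed
  next
    case (RAtom r x y)
    obtain a ws where hx: "h x = (a, ws)" by fastforce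
    obtain b ws' where hy: "h y = (b, ws')" by fastforce
    have c: "inR T S (RN r) (a, ws) (b, ws')" using hq[rule_format, OF that] RAtom hx hy cons by (simp add: cm_role_eq)
    note C = inR_cases[OF c]
    consider (n) "ws = []" "ws' = []" "sr T S (RN r) a b"
      | (ch) "ws' \<noteq> []" "b = a" "butlast ws' = ws" "tent_ri T (last ws') (PosR (RN r))"
      | (pa) "ws \<noteq> []" "a = b" "butlast ws = ws'" "tent_ri T (last ws) (PosR (Inv r))"
      using C by auto
    then show ?thesis
    proof cases
      case n
      from sr_sound[OF M n(3)] show ?thesis using RAtom hx hy n by (simp add: h'_def)
    next
      case ch
      have d: "dom2 T S (a, ws')" using C ch by simp
      from phi_step[OF d ch(1) M] have "(phi I a (rev ws), phi I a (rev ws')) \<in> rolei I (last ws')"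
        using ch by simp
      from tent_ri_P[OF ch(4) tI this] show ?thesis using RAtom hx hy ch by (simp add: h'_def)
    next
      case pa
      have d: "dom2 T S (a, ws)" using C by simp
      from phi_step[OF d pa(1) M] have "(phi I a (rev ws'), phi I a (rev ws)) \<in> rolei I (last ws)"
        using pa by simp
      from tent_ri_P[OF pa(4) tI this] show ?thesis using RAtom hx hy pa by (simp add: h'_def)
    qed
  qed
  then show "\<exists>h. \<forall>\<alpha>\<in>q. sat_atom I h \<alpha>" by blast
qed

lemma dom2_root: "dom2 T S (a, ws) \<Longrightarrow> \<exists>g\<in>S. a \<in> acon g \<and> (ws \<noteq> [] \<longrightarrow> sb T {g} (Ex (hd ws)) a)"
proof -
  assume d: "dom2 T S (a, ws)"
  show ?thesis
  proof (cases "ws = []")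
    case True
    have "a \<in> constA S" using d by (simp add: dom2_def)
    then obtain g where "g \<in> S" "a \<in> acon g" by (auto simp: constA_def)
    then show ?thesis using True by blast
  next
    case False
    then have "sb T S (Ex (hd ws)) a" using d by (simp add: dom2_def)
    then obtain g where g: "g \<in> S" "sb T {g} (Ex (hd ws)) a" using sb_single by metis
    then have "a \<in> acon g" using sb_const[of T "{g}"] by simp
    then show ?thesis using g by blast
  qed
qed

lemma dom2_g:
  assumes "dom2 T S (a, ws)" "g \<in> S" "a \<in> acon g" "ws \<noteq> [] \<Longrightarrow> sb T {g} (Ex (hd ws)) a"
  shows "dom2 T {g} (a, ws)"
proof -
  have "\<not> sr T {g} (hd ws) a b" if "ws \<noteq> []" "b \<in> acon g" for b
  proof
    assume "sr T {g} (hd ws) a b"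
    then have "sr T S (hd ws) a b" using sr_mono[of T "{g}" "hd ws" a b S] assms(2) by simp
    moreover have "b \<in> constA S" using that assms(2) by (auto simp: constA_def)
    ultimately show False using assms(1) that(1) by (auto simp: dom2_def)
  qed
  then show ?thesis using assms by (auto simp: dom2_def)
qed

lemma hd_butlast: "butlast xs \<noteq> [] \<Longrightarrow> hd (butlast xs) = hd xs"
  by (cases xs) auto

lemma con2_single: "con2 T S A (a, ws) \<Longrightarrow> \<exists>g\<in>S. con2 T {g} A (a, ws)"
proof -
  assume c: "con2 T S A (a, ws)"
  then have d: "dom2 T S (a, ws)" by (simp add: con2_def)
  show ?thesis
  proof (cases "ws = []")
    case True
    then have "sb T S (AC A) a" using c by (simp add: con2_def)
    then obtain g where g: "g \<in> S" "sb T {g} (AC A) a" using sb_single by metis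
    then have "a \<in> acon g" using sb_const[of T "{g}"] by simp
    then have "dom2 T {g} (a, ws)" using dom2_g[OF d g(1)] True by simp
    then show ?thesis using g True by (auto simp: con2_def)
  next
    case False
    obtain g where g: "g \<in> S" "a \<in> acon g" "ws \<noteq> [] \<longrightarrow> sb T {g} (Ex (hd ws)) a" using dom2_root[OF d] by blast
    then have "dom2 T {g} (a, ws)" using dom2_g[OF d g(1) g(2)] by blast
    then show ?thesis using g c False by (auto simp: con2_def)
  qed
qed

lemma inR_single: "inR T S R (a, ws) (b, ws') \<Longrightarrow> \<exists>g\<in>S. inR T {g} R (a, ws) (b, ws')"
proof -
  assume c: "inR T S R (a, ws) (b, ws')"
  note C = inR_cases[OF c]
  consider (n) "ws = []" "ws' = []" "sr T S R a b"
      | (ch) "ws' \<noteq> []" "b = a" "butlast ws' = ws"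
      | (pa) "ws \<noteq> []" "a = b" "butlast ws = ws'"
      using C by auto
  then show ?thesis
  proof cases
    case n
    then obtain g where g: "g \<in> S" "sr T {g} R a b" using sr_single by metis
    have ab: "a \<in> acon g" "b \<in> acon g" using sr_const[OF g(2)] by simp_all
    have D1: "dom2 T {g} (a, ws)" using dom2_g[of T S a ws g] C g(1) ab(1) n by simp
    have D2: "dom2 T {g} (b, ws')" using dom2_g[of T S b ws' g] C g(1) ab(2) n by simp
    have "inR T {g} R (a, ws) (b, ws')" using inR_transfer[OF c D1 D2] g(2) by simp
    then show ?thesis using g(1) by blast
  next
    case ch
    have d': "dom2 T S (a, ws')" using C ch by simp
    obtain g where g: "g \<in> S" "a \<in> acon g" "ws' \<noteq> [] \<longrightarrow> sb T {g} (Ex (hd ws')) a" using dom2_root[OF d'] by blast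
    have D2: "dom2 T {g} (b, ws')" using dom2_g[OF d' g(1) g(2)] g(3) ch by blast
    have hh: "hd ws = hd ws'" if "ws \<noteq> []" using hd_butlast[of ws'] ch(3) that by simp
    have D1: "dom2 T {g} (a, ws)" using dom2_g[of T S a ws g] C g ch hh by auto
    have "inR T {g} R (a, ws) (b, ws')" using inR_transfer[OF c D1 D2] ch by simp
    then show ?thesis using g(1) by blast
  next
    case pa
    have d: "dom2 T S (a, ws)" using C by simp
    obtain g where g: "g \<in> S" "a \<in> acon g" "ws \<noteq> [] \<longrightarrow> sb T {g} (Ex (hd ws)) a" using dom2_root[OF d] by blast
    have D1: "dom2 T {g} (a, ws)" using dom2_g[OF d g(1) g(2)] g(3) by blast
    have hh: "hd ws' = hd ws" if "ws' \<noteq> []" using hd_butlast[of ws] pa(3) that by simp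
    have D2: "dom2 T {g} (b, ws')" using dom2_g[of T S b ws' g] C g pa hh by auto
    have "inR T {g} R (a, ws) (b, ws')" using inR_transfer[OF c D1 D2] pa by simp
    then show ?thesis using g(1) by blast
  qed
qed

lemma dom2_mono:
  assumes d: "dom2 T S w" and dg: "dom2 T {g} w" and g: "g \<in> S'" and sub: "S' \<subseteq> S"
  shows "dom2 T S' w"
proof -
  have c1: "fst w \<in> constA S'" using dg g by (auto simp: dom2_def constA_def)
  have c2: "sb T S' (Ex (hd (snd w))) (fst w)" if "snd w \<noteq> []"
    using dg that sb_mono[of T "{g}" "Ex (hd (snd w))" "fst w" S'] g by (auto simp: dom2_def)
  have c3: "\<not> sr T S' (hd (snd w)) (fst w) b" if "snd w \<noteq> []" "b \<in> constA S'" for b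
  proof
    assume "sr T S' (hd (snd w)) (fst w) b"
    then have "sr T S (hd (snd w)) (fst w) b" using sr_mono[OF _ sub] by blast
    moreover have "b \<in> constA S" using constA_mono[OF sub] that(2) by blast
    ultimately show False using d that(1) by (auto simp: dom2_def)
  qed
  show ?thesis using c1 c2 c3 d by (auto simp: dom2_def)
qed

lemma con2_mono: "con2 T S A w \<Longrightarrow> con2 T {g} A w \<Longrightarrow> g \<in> S' \<Longrightarrow> S' \<subseteq> S \<Longrightarrow> con2 T S' A w"
  unfolding con2_def using dom2_mono sb_mono[of T "{g}" "AC A" "fst w" S'] by (metis empty_subsetI insert_subset)

lemma inR_mono:
  assumes "inR T S R w w'" "inR T {g} R w w'" "g \<in> S'" "S' \<subseteq> S"
  shows "inR T S' R w w'"
proof -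
  have "dom2 T S' w" "dom2 T S' w'" using assms dom2_mono unfolding inR_def by metis+
  moreover have "sr T S' R (fst w) (fst w')" if "sr T {g} R (fst w) (fst w')"
    using sr_mono[OF that] assms(3) by simp
  ultimately show ?thesis using inR_transfer[OF assms(2)] by blast
qed


lemma atom_dom:
  assumes "consistent T S" "cm_atom T S h \<alpha>" "x \<in> avars \<alpha>"
  shows "dom2 T S (h x)"
proof (cases \<alpha>)
  case (CAtom A y)
  then show ?thesis using assms by (auto simp: cm_con_eq con2_def)
next
  case (RAtom r y z)
  then show ?thesis using assms by (auto simp: cm_role_eq inR_def)
qed

lemma atom_single:
  assumes "consistent T S" "cm_atom T S h \<alpha>"
  shows "\<exists>g\<in>S. cm_atom T {g} h \<alpha>"
proof (cases \<alpha>)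
  case (CAtom A x)
  obtain a ws where hx: "h x = (a, ws)" by fastforce
  have "con2 T S A (a, ws)" using assms CAtom hx by (simp add: cm_con_eq)
  then obtain g where g: "g \<in> S" "con2 T {g} A (a, ws)" using con2_single by metis
  have "consistent T {g}" using consistent_sub[OF assms(1)] g(1) by blast
  then have "cm_con T {g} A (a, ws)" using cm_con_eq g(2) by metis
  then show ?thesis using g(1) CAtom hx by auto
next
  case (RAtom r x y)
  obtain a ws where hx: "h x = (a, ws)" by fastforce
  obtain b ws' where hy: "h y = (b, ws')" by fastforce
  have "inR T S (RN r) (a, ws) (b, ws')" using assms RAtom hx hy by (simp add: cm_role_eq)
  then obtain g where g: "g \<in> S" "inR T {g} (RN r) (a, ws) (b, ws')" using inR_single by metis
  have "consistent T {g}" using consistent_sub[OF assms(1)] g(1) by blast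
  then have "cm_role T {g} r (a, ws) (b, ws')" using cm_role_eq g(2) by metis
  then show ?thesis using g(1) RAtom hx hy by auto
qed

lemma atom_mono:
  assumes "consistent T S" "cm_atom T S h \<alpha>" "cm_atom T {g} h \<alpha>" "g \<in> S'" "S' \<subseteq> S"
  shows "cm_atom T S' h \<alpha>"
proof -
  have c1: "consistent T {g}" "consistent T S'" using consistent_sub[OF assms(1)] assms(4,5) by auto
  show ?thesis
  proof (cases \<alpha>)
    case (CAtom A x)
    then show ?thesis using assms c1 con2_mono[of T S A "h x" g S'] by (simp add: cm_con_eq)
  next
    case (RAtom r x y)
    then show ?thesis using assms c1 inR_mono[of T S "RN r" "h x" "h y" g S'] by (simp add: cm_role_eq)
  qed
qed

lemma support_atom:
  fixes T :: "('c,'r) axiom set" and A S :: "('c,'r,'i) assertion set" and q :: "('c,'r,'v) atom set"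
  assumes cons: "consistent T S" and ms: "S \<in> min_supports T q A" and f: "f \<in> S"
  shows "\<exists>\<alpha>\<in>q. \<exists>\<mu>. valid_mu f \<alpha> \<mu> \<and> ent_mu T f \<alpha> \<mu>"
proof (rule ccontr)
  assume nsup: "\<not> ?thesis"
  have ent: "entails T S q" using ms by (simp add: min_supports_def)
  obtain h where h: "\<forall>\<alpha>\<in>q. cm_atom T S h \<alpha>" using ent_hom[OF cons ent] by blast
  have consf: "consistent T {f}" using consistent_sub[OF cons, of "{f}"] f by simp
  have "cm_atom T (S - {f}) h \<alpha>" if aq: "\<alpha> \<in> q" for \<alpha>
  proof -
    have ha: "cm_atom T S h \<alpha>" using h aq by blast
    obtain g where g: "g \<in> S" "cm_atom T {g} h \<alpha>" using atom_single[OF cons ha] by blast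
    have "g \<noteq> f"
    proof
      assume gf: "g = f"
      define \<mu> where "\<mu> = (\<lambda>x. if snd (h x) = [] then Some (fst (h x)) else None)"
      have hf: "cm_atom T {f} h \<alpha>" using g gf by simp
      have dx: "dom2 T {f} (h x)" if "x \<in> avars \<alpha>" for x using atom_dom[OF consf hf that] .
      have "valid_mu f \<alpha> \<mu>" unfolding valid_mu_def
      proof
        fix x assume "x \<in> avars \<alpha>"
        then have "fst (h x) \<in> acon f" using dx by (simp add: dom2_def)
        then show "\<mu> x = None \<or> (\<exists>c\<in>acon f. \<mu> x = Some c)" by (auto simp: \<mu>_def)
      qed
      moreover have "ent_mu T f \<alpha> \<mu>" unfolding ent_mu_def
      proof (intro exI conjI)
        show "\<forall>x\<in>avars \<alpha>. (case \<mu> x of Some c \<Rightarrow> h x = (c, []) | None \<Rightarrow> snd (h x) \<noteq> [])"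
          by (auto simp: \<mu>_def prod_eq_iff)
        show "cm_atom T {f} h \<alpha>" by (rule hf)
      qed
      ultimately show False using nsup aq by blast
    qed
    then have "g \<in> S - {f}" using g by simp
    then show "cm_atom T (S - {f}) h \<alpha>" using atom_mono[OF cons ha g(2), of "S - {f}"] by simp
  qed
  then have "\<forall>\<alpha>\<in>q. cm_atom T (S - {f}) h \<alpha>" by blast
  moreover have "consistent T (S - {f})" using consistent_sub[OF cons, of "S - {f}"] by simp
  ultimately have "entails T (S - {f}) q" using hom_ent by metis
  moreover have "S - {f} \<subset> S" using f by blast
  ultimately show False using ms by (simp add: min_supports_def)
qed


lemma entails_mono: "entails T S q \<Longrightarrow> S \<subseteq> S' \<Longrightarrow> entails T S' q"
  unfolding entails_def model_def by blast

lemma sat_atom_cong: "(\<And>x. x \<in> avars \<alpha> \<Longrightarrow> h x = h' x) \<Longrightarrow> sat_atom I h \<alpha> = sat_atom I h' \<alpha>"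
  by (cases \<alpha>) auto

lemma avars_sub: "\<alpha> \<in> q \<Longrightarrow> avars \<alpha> \<subseteq> qvars q"
  unfolding qvars_def by blast

lemma avars_ne: "avars \<alpha> \<noteq> {}"
  by (cases \<alpha>) auto

lemma entails_union:
  fixes T :: "('c,'r) axiom set" and S :: "('c,'r,'i) assertion set" and q1 q2 :: "('c,'r,'v) atom set"
  assumes "qvars q1 \<inter> qvars q2 = {}"
  shows "entails T S (q1 \<union> q2) = (entails T S q1 \<and> entails T S q2)"
proof
  assume "entails T S (q1 \<union> q2)"
  then show "entails T S q1 \<and> entails T S q2" unfolding entails_def holds_q_def by blast
next
  assume e: "entails T S q1 \<and> entails T S q2"
  show "entails T S (q1 \<union> q2)" unfolding entails_def
  proof (intro allI impI)
    fix I :: "('c,'r,'i) kinterp" assume m: "model T S I"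
    have "holds_q q1 I" using e[THEN conjunct1, unfolded entails_def, rule_format, OF m] .
    then obtain h1 where h1: "\<forall>\<alpha>\<in>q1. sat_atom I h1 \<alpha>" unfolding holds_q_def by blast
    have "holds_q q2 I" using e[THEN conjunct2, unfolded entails_def, rule_format, OF m] .
    then obtain h2 where h2: "\<forall>\<alpha>\<in>q2. sat_atom I h2 \<alpha>" unfolding holds_q_def by blast
    define h where "h = (\<lambda>x. if x \<in> qvars q1 then h1 x else h2 x)"
    have "sat_atom I h \<alpha>" if "\<alpha> \<in> q1 \<union> q2" for \<alpha>
    proof (cases "\<alpha> \<in> q1")
      case True
      have "\<And>x. x \<in> avars \<alpha> \<Longrightarrow> h x = h1 x" using avars_sub[OF True] by (auto simp: h_def)
      then have "sat_atom I h \<alpha> = sat_atom I h1 \<alpha>" by (rule sat_atom_cong)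
      then show ?thesis using h1 True by simp
    next
      case False
      then have q2: "\<alpha> \<in> q2" using that by simp
      have "\<And>x. x \<in> avars \<alpha> \<Longrightarrow> h x = h2 x" using avars_sub[OF q2] assms by (auto simp: h_def)
      then have "sat_atom I h \<alpha> = sat_atom I h2 \<alpha>" by (rule sat_atom_cong)
      then show ?thesis using h2 q2 by simp
    qed
    then show "holds_q (q1 \<union> q2) I" unfolding holds_q_def by blast
  qed
qed

lemma ms_min:
  assumes "S \<in> min_supports T q A" "S' \<subseteq> S" "entails T S' q"
  shows "S' = S"
proof (rule ccontr)
  assume "S' \<noteq> S"
  then have ps: "S' \<subset> S" using assms(2) by (rule psubsetI[rotated])
  have "\<forall>S'. S' \<subset> S \<longrightarrow> \<not> entails T S' q" using assms(1) by (simp add: min_supports_def)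
  then show False using ps assms(3) by simp
qed

lemma exists_ms:
  assumes "finite A" "S \<subseteq> A" "entails T S q"
  shows "\<exists>S0\<in>min_supports T q A. S0 \<subseteq> S"
proof -
  have "S \<subseteq> S \<and> entails T S q" using assms(3) by simp
  from ex_has_least_nat[of "\<lambda>S0. S0 \<subseteq> S \<and> entails T S0 q" S card, OF this]
  obtain S0 where S0: "S0 \<subseteq> S" "entails T S0 q" and mn: "\<And>y. y \<subseteq> S \<and> entails T y q \<Longrightarrow> card S0 \<le> card y"
    by blast
  have fin: "finite S0" using S0(1) assms(1,2) by (meson finite_subset)
  have "\<not> entails T S' q" if ps: "S' \<subset> S0" for S'
  proof
    assume e: "entails T S' q"
    have "S' \<subseteq> S" using ps S0(1) by (meson order.trans psubset_imp_subset)
    then have "card S0 \<le> card S'" using mn e by simp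
    moreover have "card S' < card S0" using psubset_card_mono[OF fin ps] .
    ultimately show False by simp
  qed
  moreover have "S0 \<subseteq> A" using S0(1) assms(2) by (meson order.trans)
  ultimately have "S0 \<in> min_supports T q A" using S0(2) unfolding min_supports_def by simp
  then show ?thesis using S0(1) by blast
qed

theorem lemma10:
  fixes T :: "('c,'r) axiom set"
    and q1 q2 :: "('c,'r,'v) atom set"
    and A :: "('c,'r,'i) assertion set"
  assumes "finite T"
    and "finite q1" and "finite q2"
    and "qvars q1 \<inter> qvars q2 = {}"
    and "interaction_free T (q1 \<union> q2) TYPE('i)"
    and "finite A"
    and "consistent T A"
  shows "num_ms T (q1 \<union> q2) A = num_ms T q1 A * num_ms T q2 A"
proof -
  note dj = assms(4) and ifree = assms(5) and finA = assms(6) and consA = assms(7)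
  define M1 where "M1 = min_supports T q1 A"
  define M2 where "M2 = min_supports T q2 A"
  define M where "M = min_supports T (q1 \<union> q2) A"
  have subA: "S \<subseteq> A" if "S \<in> min_supports T q A" for S and q :: "('c,'r,'v) atom set"
    using that by (simp add: min_supports_def)
  have entS: "entails T S q" if "S \<in> min_supports T q A" for S and q :: "('c,'r,'v) atom set"
    using that by (simp add: min_supports_def)
  have disj: "S1 \<inter> S2 = {}" if s1: "S1 \<in> M1" and s2: "S2 \<in> M2" for S1 S2
  proof (rule ccontr)
    assume "S1 \<inter> S2 \<noteq> {}"
    then obtain f where f: "f \<in> S1" "f \<in> S2" by blast
    have c1: "consistent T S1" using consistent_sub[OF consA subA[OF s1[unfolded M1_def]]] .
    have c2: "consistent T S2" using consistent_sub[OF consA subA[OF s2[unfolded M2_def]]] .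
    obtain \<alpha> \<mu>\<alpha> where a: "\<alpha> \<in> q1" "valid_mu f \<alpha> \<mu>\<alpha>" "ent_mu T f \<alpha> \<mu>\<alpha>"
      using support_atom[OF c1 s1[unfolded M1_def] f(1)] by blast
    obtain \<beta> \<mu>\<beta> where b: "\<beta> \<in> q2" "valid_mu f \<beta> \<mu>\<beta>" "ent_mu T f \<beta> \<mu>\<beta>"
      using support_atom[OF c2 s2[unfolded M2_def] f(2)] by blast
    have cf: "consistent T {f}" using consistent_sub[OF c1, of "{f}"] f(1) by simp
    have aq: "\<alpha> \<in> q1 \<union> q2" "\<beta> \<in> q1 \<union> q2" using a(1) b(1) by simp_all
    have "valid_mu f \<alpha> \<mu>\<alpha> \<and> valid_mu f \<beta> \<mu>\<beta> \<and> ent_mu T f \<alpha> \<mu>\<alpha> \<and> ent_mu T f \<beta> \<mu>\<beta>"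
      using a b by simp
    from ifree[unfolded interaction_free_def, rule_format, OF cf aq(1) aq(2) this]
    have ab: "\<alpha> = \<beta>" by simp
    have v1: "avars \<alpha> \<subseteq> qvars q1" by (rule avars_sub[OF a(1)])
    have v2: "avars \<alpha> \<subseteq> qvars q2" using avars_sub[OF b(1)] ab by simp
    have "avars \<alpha> = {}" using v1 v2 dj by blast
    then show False using avars_ne[of \<alpha>] by simp
  qed
  have ms_ent_union: "entails T S (q1 \<union> q2) = (entails T S q1 \<and> entails T S q2)" for S
    by (rule entails_union[OF dj])
  define U where "U = (\<lambda>p :: ('c,'r,'i) assertion set \<times> ('c,'r,'i) assertion set. fst p \<union> snd p)"
  have img: "M = U ` (M1 \<times> M2)"
  proof
    show "M \<subseteq> U ` (M1 \<times> M2)"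
    proof
      fix S assume sM: "S \<in> M"
      have e: "entails T S q1" "entails T S q2" using entS[OF sM[unfolded M_def]] ms_ent_union by auto
      have sA: "S \<subseteq> A" using subA[OF sM[unfolded M_def]] .
      obtain S1 where S1: "S1 \<in> M1" "S1 \<subseteq> S" using exists_ms[OF finA sA e(1)] unfolding M1_def by blast
      obtain S2 where S2: "S2 \<in> M2" "S2 \<subseteq> S" using exists_ms[OF finA sA e(2)] unfolding M2_def by blast
      have "entails T (S1 \<union> S2) q1" using entails_mono[OF entS[OF S1(1)[unfolded M1_def]]] by blast
      moreover have "entails T (S1 \<union> S2) q2" using entails_mono[OF entS[OF S2(1)[unfolded M2_def]]] by blast
      ultimately have "entails T (S1 \<union> S2) (q1 \<union> q2)" using ms_ent_union by blast
      then have "S1 \<union> S2 = S" using ms_min[OF sM[unfolded M_def]] S1(2) S2(2) by blast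
      then show "S \<in> U ` (M1 \<times> M2)" unfolding U_def using S1(1) S2(1)
        by (intro image_eqI[of _ _ "(S1, S2)"]) auto
    qed
  next
    show "U ` (M1 \<times> M2) \<subseteq> M"
    proof
      fix S assume "S \<in> U ` (M1 \<times> M2)"
      then obtain S1 S2 where S1: "S1 \<in> M1" and S2: "S2 \<in> M2" and S: "S = S1 \<union> S2"
        unfolding U_def by auto
      have sA: "S \<subseteq> A" using subA[OF S1[unfolded M1_def]] subA[OF S2[unfolded M2_def]] S by blast
      have e1: "entails T S q1" using entails_mono[OF entS[OF S1[unfolded M1_def]]] S by blast
      have e2: "entails T S q2" using entails_mono[OF entS[OF S2[unfolded M2_def]]] S by blast
      have e: "entails T S (q1 \<union> q2)" using e1 e2 ms_ent_union by blast
      have mn: "\<not> entails T S' (q1 \<union> q2)" if "S' \<subset> S" for S'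
      proof
        assume e': "entails T S' (q1 \<union> q2)"
        have s'A: "S' \<subseteq> A" using that sA by blast
        have e'': "entails T S' q1" "entails T S' q2" using e' ms_ent_union by auto
        obtain S1' where S1': "S1' \<in> M1" "S1' \<subseteq> S'" using exists_ms[OF finA s'A e''(1)] unfolding M1_def by blast
        obtain S2' where S2': "S2' \<in> M2" "S2' \<subseteq> S'" using exists_ms[OF finA s'A e''(2)] unfolding M2_def by blast
        have "S1' \<inter> S2 = {}" using disj[OF S1'(1) S2] .
        then have "S1' \<subseteq> S1" using S1'(2) that S by blast
        then have "S1' = S1" using ms_min[OF S1[unfolded M1_def]] entS[OF S1'(1)[unfolded M1_def]] by blast
        have "S1 \<inter> S2' = {}" using disj[OF S1 S2'(1)] .
        then have "S2' \<subseteq> S2" using S2'(2) that S by blast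
        then have "S2' = S2" using ms_min[OF S2[unfolded M2_def]] entS[OF S2'(1)[unfolded M2_def]] by blast
        show False using \<open>S1' = S1\<close> \<open>S2' = S2\<close> S1'(2) S2'(2) that S by blast
      qed
      show "S \<in> M" unfolding M_def min_supports_def using sA e mn by blast
    qed
  qed
  have inj: "inj_on U (M1 \<times> M2)"
  proof (rule inj_onI)
    fix p p' assume p: "p \<in> M1 \<times> M2" and p': "p' \<in> M1 \<times> M2" and eq: "U p = U p'"
    obtain S1 S2 where pp: "p = (S1, S2)" by fastforce
    obtain S1' S2' where pp': "p' = (S1', S2')" by fastforce
    have m: "S1 \<in> M1" "S2 \<in> M2" "S1' \<in> M1" "S2' \<in> M2" using p p' pp pp' by auto
    have u: "S1 \<union> S2 = S1' \<union> S2'" using eq pp pp' by (simp add: U_def)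
    have "S1' \<subseteq> S1" using disj[OF m(3) m(2)] u by blast
    then have a1: "S1' = S1" using ms_min[OF m(1)[unfolded M1_def]] entS[OF m(3)[unfolded M1_def]] by blast
    have "S2' \<subseteq> S2" using disj[OF m(1) m(4)] u by blast
    then have a2: "S2' = S2" using ms_min[OF m(2)[unfolded M2_def]] entS[OF m(4)[unfolded M2_def]] by blast
    show "p = p'" using pp pp' a1 a2 by simp
  qed
  have "card M = card (M1 \<times> M2)" using img inj card_image by metis
  then show ?thesis by (simp add: num_ms_def M_def M1_def M2_def card_cartesian_product)
qed

end
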